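(* Let $r\ge 2$, let $\lambda,\mu\in\Lambda$ with $\lambda\sim_e\mu$, and let $s\in\mathbb{Z}$. Then $\eta(\lambda,s)\xrightarrow{r}_2\eta(\mu,s)$ (as elements of $\mathcal{A}_r^e$) if and only if $\Phi_r(\lambda,s)\xrightarrow{e}_2\Phi_r(\mu,s)$ (as elements of $\mathcal{A}_e^r$).
   Context: Fix an integer $e\ge 2$. A partition is a weakly decreasing sequence $\lambda=(\lambda_1,\lambda_2,\dots)$ of non-negative integers with finite sum $|\lambda|$; $\Lambda$ denotes the set of partitions and $\Lambda^{(m)}$ the set of $m$-multipartitions, i.e. $m$-tuples $\boldsymbol\lambda=(\lambda^{(1)},\dots,\lambda^{(m)})$ of partitions, with $|\boldsymbol\lambda|=\sum_k|\lambda^{(k)}|$. A $\beta$-set is a subset $B\subseteq\mathbb{Z}$ containing all sufficiently small integers and no sufficiently large ones. For $\lambda\in\Lambda$ and $s\in\mathbb{Z}$ set $B_s(\lambda)=\{\lambda_i-i+s : i\ge 1\}$; every $\beta$-set equals $B_s(\lambda)$ for a unique pair $(\lambda,s)$. For $N\ge 2$ let $\mathcal{A}_N=\Lambda\times\mathbb{Z}$ (abacus configurations with $N$ runners) and $\mathcal{A}_N^m=\Lambda^{(m)}\times\mathbb{Z}^m$, where $(\boldsymbol\lambda,\mathbf{s})$ is identified with the $m$-tuple of $\beta$-sets $(B_{s_1}(\lambda^{(1)}),\dots,B_{s_m}(\lambda^{(m)}))$. The map $\eta$: for $(\lambda,s)\in\mathcal{A}_e$ with $B=B_s(\lambda)$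 and $0\le i<e$, the set $C_i=\{(b-i)/e : b\in B,\ b\equiv i \bmod e\}$ is a $\beta$-set, so $C_i=B_{t_i}(\rho_i)$ for a unique $(\rho_i,t_i)\in\Lambda\times\mathbb{Z}$; set $\eta(\lambda,s)=((\rho_0,\dots,\rho_{e-1}),(t_0,\dots,t_{e-1}))\in\Lambda^{(e)}\times\mathbb{Z}^e$, which we also regard as an element of $\mathcal{A}_r^e$. The $e$-weight of $\lambda$ is $\mathrm{wt}(\lambda)=\sum_i|\rho_i|$. For $\lambda,\mu\in\Lambda$ write $\lambda\sim_e\mu$ if $|\lambda|=|\mu|$, $\mathrm{wt}(\lambda)=\mathrm{wt}(\mu)$ and $\lambda,\mu$ have the same $e$-core (equivalently, $(\lambda,s)$ and $(\mu,s)$ have the same $t$-component under $\eta$ and the same weight, for any $s$). Moves on $\mathcal{A}_N^m$, for $(\boldsymbol\lambda,\mathbf{s}),(\boldsymbol\mu,\mathbf{s})$ with the same $\mathbf{s}$: (1) $(\boldsymbol\lambda,\mathbf{s})\xrightarrow{N}_1(\boldsymbol\mu,\mathbf{s})$ if for some $k_1,k_2\in\{1,\dots,m\}$ the tuple of $\beta$-sets of $(\boldsymbol\mu,\mathbf{s})$ is obtained from that of $(\boldsymbol\lambda,\mathbf{s})$ by replacing an element $b$ of the $k_1$-th $\beta$-set by $b-N$ (not previously in that set) and then replacing an element $c$ of the $k_2$-th $\beta$-set by $c+N$ (not previously in that set). (2) $(\boldsymbol\lambda,\mathbf{s})\xrightarrow{N}_2(\boldsymbol\mu,\mathbf{s})$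 if there exist $k_1,k_2\in\{1,\dots,m\}$, $b_1,b_2\in\mathbb{Z}$ with $b_1\equiv b_2\bmod N$, and $h>0$, such that $b_1\in B_{s_{k_1}}(\lambda^{(k_1)})$, $b_1+h\notin B_{s_{k_1}}(\lambda^{(k_1)})$, $b_2\notin B_{s_{k_2}}(\lambda^{(k_2)})$, $b_2+h\in B_{s_{k_2}}(\lambda^{(k_2)})$, and the $\beta$-sets of $(\boldsymbol\mu,\mathbf{s})$ agree with those of $(\boldsymbol\lambda,\mathbf{s})$ except that $b_1$ is replaced by $b_1+h$ in component $k_1$ and $b_2+h$ is replaced by $b_2$ in component $k_2$. Uglov's map: for $1\le k\le r$ define $\psi_k:\mathbb{Z}\to\mathbb{Z}$ by $\psi_k(ae+i)=((a+1)r-k)e+i$ for $a\in\mathbb{Z}$, $0\le i<e$. For $(\boldsymbol\lambda,\mathbf{s})\in\mathcal{A}_e^r$ the set $B=\bigsqcup_{k=1}^r\psi_k(B_{s_k}(\lambda^{(k)}))$ is a $\beta$-set, and $\Psi_r(\boldsymbol\lambda,\mathbf{s})$ is the unique $(\tilde\lambda,\tilde s)\in\mathcal{A}_e$ with $B_{\tilde s}(\tilde\lambda)=B$. $\Psi_r:\mathcal{A}_e^r\to\mathcal{A}_e$ is a bijection; $\Phi_r=\Psi_r^{-1}$. *)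

theory Defs
  imports Main
begin

text \<open>A partition is represented by the list of its nonzero parts, weakly decreasing.
  Part lambda_(i+1) (1-indexed in the paper) is pnth lam i (0-indexed), 0 beyond the length.\<close>

type_synonym partition = "nat list"

definition is_partition :: "partition \<Rightarrow> bool" where
  "is_partition lam \<longleftrightarrow> sorted_wrt (\<ge>) lam \<and> (\<forall>x\<in>set lam. 0 < x)"

definition pnth :: "partition \<Rightarrow> nat \<Rightarrow> nat" where
  "pnth lam i = (if i < length lam then lam ! i else 0)"

definition psize :: "partition \<Rightarrow> nat" where
  "psize lam = sum_list lam"

definition beta :: "int \<Rightarrow> partition \<Rightarrow> int set" where
  "beta s lam = {int (pnth lam i) - (int i + 1) + s | i. True}"

definition beta_inv :: "int set \<Rightarrow> partition \<times> int" where
  "beta_inv C = (THE p. is_partition (fst p) \<and> beta (snd p) (fst p) = C)"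

text \<open>An element of A_N^m: a list of m partitions and a list of m charges.\<close>
type_synonym config = "partition list \<times> int list"

definition config_ok :: "nat \<Rightarrow> config \<Rightarrow> bool" where
  "config_ok m X \<longleftrightarrow> length (fst X) = m \<and> length (snd X) = m \<and>
     (\<forall>k<m. is_partition (fst X ! k))"

definition cbeta :: "config \<Rightarrow> nat \<Rightarrow> int set" where
  "cbeta X k = beta (snd X ! k) (fst X ! k)"

definition runner_set :: "nat \<Rightarrow> int set \<Rightarrow> nat \<Rightarrow> int set" where
  "runner_set e B i = {(b - int i) div int e | b. b \<in> B \<and> b mod int e = int i}"

definition eta :: "nat \<Rightarrow> partition \<Rightarrow> int \<Rightarrow> config" where
  "eta e lam s =
     (map (\<lambda>i. fst (beta_inv (runner_set e (beta s lam) i))) [0..<e],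
      map (\<lambda>i. snd (beta_inv (runner_set e (beta s lam) i))) [0..<e])"

definition ewt :: "nat \<Rightarrow> partition \<Rightarrow> nat" where
  "ewt e lam = sum_list (map psize (fst (eta e lam 0)))"

text \<open>e-core via the abacus: slide all beads on each runner up (charge 0).\<close>
definition ecore :: "nat \<Rightarrow> partition \<Rightarrow> partition" where
  "ecore e lam = fst (beta_inv
     {b. \<exists>i<e. b mod int e = int i \<and> (b - int i) div int e < snd (eta e lam 0) ! i})"

definition e_equiv :: "nat \<Rightarrow> partition \<Rightarrow> partition \<Rightarrow> bool" where
  "e_equiv e lam mu \<longleftrightarrow> psize lam = psize mu \<and> ewt e lam = ewt e mu \<and> ecore e lam = ecore e mu"

definition move2 :: "nat \<Rightarrow> config \<Rightarrow> config \<Rightarrow> bool" where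
  "move2 N X Y \<longleftrightarrow> (\<exists>m. config_ok m X \<and> config_ok m Y \<and> snd X = snd Y \<and>
     (\<exists>k1<m. \<exists>k2<m. \<exists>b1 b2 h. b1 mod int N = b2 mod int N \<and> h > 0 \<and>
        b1 \<in> cbeta X k1 \<and> b1 + h \<notin> cbeta X k1 \<and>
        b2 \<notin> cbeta X k2 \<and> b2 + h \<in> cbeta X k2 \<and>
        (\<forall>k<m. cbeta Y k =
           (cbeta X k - ((if k = k1 then {b1} else {}) \<union> (if k = k2 then {b2 + h} else {})))
             \<union> ((if k = k1 then {b1 + h} else {}) \<union> (if k = k2 then {b2} else {})))))"

definition psi :: "nat \<Rightarrow> nat \<Rightarrow> nat \<Rightarrow> int \<Rightarrow> int" where
  "psi e r k b = (((b div int e) + 1) * int r - int k) * int e + b mod int e"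

text \<open>Component k (1-indexed in the paper) is entry k-1 of the lists.\<close>
definition Psi :: "nat \<Rightarrow> nat \<Rightarrow> config \<Rightarrow> partition \<times> int" where
  "Psi e r X = beta_inv (\<Union>k<r. psi e r (k + 1) ` cbeta X k)"

definition Phi :: "nat \<Rightarrow> nat \<Rightarrow> partition \<Rightarrow> int \<Rightarrow> config" where
  "Phi e r lam s = (THE X. config_ok r X \<and> Psi e r X = (lam, s))"

end

theory Submission
  imports Defs
begin



definition isb :: "int set \<Rightarrow> bool" where
  "isb C \<longleftrightarrow> (\<exists>L. \<forall>x\<le>L. x \<in> C) \<and> (\<exists>U. \<forall>x\<in>C. x \<le> U)"

lemma pnth_tl: "pnth (tl lam) j = pnth lam (Suc j)"
  unfolding pnth_def by (cases lam) auto

lemma is_partition_tl: "is_partition lam \<Longrightarrow> is_partition (tl lam)"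
  unfolding is_partition_def by (cases lam) auto

lemma pnth_mono:
  assumes "is_partition lam" "i \<le> j" shows "pnth lam j \<le> pnth lam i"
proof -
  have s: "sorted_wrt (\<ge>) lam" using assms(1) unfolding is_partition_def by simp
  show ?thesis
  proof (cases "j < length lam")
    case True
    then show ?thesis using assms(2) s unfolding pnth_def
      by (cases "i = j") (auto simp: sorted_wrt_iff_nth_less)
  next
    case False then show ?thesis unfolding pnth_def by auto
  qed
qed

lemma pnth_pos: "is_partition lam \<Longrightarrow> lam \<noteq> [] \<Longrightarrow> pnth lam 0 > 0"
  unfolding is_partition_def pnth_def by (cases lam) auto

lemma beta_cons: "beta t lam = insert (int (pnth lam 0) - 1 + t) (beta (t - 1) (tl lam))"
proof -
  have "x \<in> beta t lam \<longleftrightarrow> x \<in> insert (int (pnth lam 0) - 1 + t) (beta (t - 1) (tl lam))" for x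
  proof
    assume "x \<in> beta t lam"
    then obtain i where x: "x = int (pnth lam i) - (int i + 1) + t" unfolding beta_def by auto
    show "x \<in> insert (int (pnth lam 0) - 1 + t) (beta (t - 1) (tl lam))"
    proof (cases i)
      case 0 then show ?thesis using x by simp
    next
      case (Suc j) then show ?thesis using x unfolding beta_def pnth_tl
        by (auto intro!: exI[of _ j])
    qed
  next
    assume "x \<in> insert (int (pnth lam 0) - 1 + t) (beta (t - 1) (tl lam))"
    then show "x \<in> beta t lam" unfolding beta_def pnth_tl
      by (auto intro: exI[of _ 0] exI[of _ "Suc _"])
  qed
  then show ?thesis by blast
qed

lemma beta_Nil: "beta t [] = {x. x < t}"
proof -
  have "x \<in> beta t [] \<longleftrightarrow> x < t" for x
    unfolding beta_def pnth_def by (auto intro!: exI[of _ "nat (t - x - 1)"])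
  then show ?thesis by blast
qed

lemma beta_le: "is_partition lam \<Longrightarrow> x \<in> beta t lam \<Longrightarrow> x \<le> int (pnth lam 0) - 1 + t"
proof -
  assume p: "is_partition lam" and "x \<in> beta t lam"
  then obtain i where x: "x = int (pnth lam i) - (int i + 1) + t" unfolding beta_def by auto
  have "pnth lam i \<le> pnth lam 0" using pnth_mono[OF p, of 0 i] by simp
  then show ?thesis using x by simp
qed

lemma beta_lt: "is_partition lam \<Longrightarrow> x \<in> beta (t - 1) (tl lam) \<Longrightarrow> x < int (pnth lam 0) - 1 + t"
proof -
  assume p: "is_partition lam" and "x \<in> beta (t - 1) (tl lam)"
  then obtain i where x: "x = int (pnth lam (Suc i)) - (int i + 1) + (t - 1)" unfolding beta_def pnth_tl by auto
  have "pnth lam (Suc i) \<le> pnth lam 0" using pnth_mono[OF p, of 0 "Suc i"] by simp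
  then show ?thesis using x by simp
qed

lemma beta_low: "x \<le> t - int (length lam) - 1 \<Longrightarrow> x \<in> beta t lam"
  unfolding beta_def pnth_def by (auto intro!: exI[of _ "nat (t - x - 1)"])

lemma beta_isb: "is_partition lam \<Longrightarrow> isb (beta t lam)"
  unfolding isb_def using beta_low beta_le by blast

lemma beta_inj_aux:
  "\<forall>lam lam' t t'. length lam + length lam' = n \<longrightarrow> is_partition lam \<longrightarrow> is_partition lam' \<longrightarrow>
     beta t lam = beta t' lam' \<longrightarrow> lam = lam' \<and> t = t'"
proof (induction n rule: less_induct)
  case (less n)
  show ?case
  proof (intro allI impI)
    fix lam lam' t t'
    assume n: "length lam + length lam' = n" and p: "is_partition lam" and p': "is_partition lam'"
      and eq: "beta t lam = beta t' lam'"
    show "lam = lam' \<and> t = t'"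
    proof (cases "lam = [] \<and> lam' = []")
      case True
      then have "{x. x < t} = {x. x < t'}" using eq beta_Nil by simp
      then have "t = t'" by (metis linorder_neqE_linordered_idom mem_Collect_eq order_less_irrefl)
      then show ?thesis using True by simp
    next
      case False
      define M where "M = int (pnth lam 0) - 1 + t"
      define M' where "M' = int (pnth lam' 0) - 1 + t'"
      have "M \<in> beta t' lam'" using eq beta_cons[of t lam] M_def by auto
      then have "M \<le> M'" using beta_le[OF p'] M'_def by auto
      moreover have "M' \<in> beta t lam" using eq beta_cons[of t' lam'] M'_def by auto
      then have "M' \<le> M" using beta_le[OF p] M_def by auto
      ultimately have MM: "M = M'" by simp
      have r1: "beta (t - 1) (tl lam) = beta t lam - {M}"
        using beta_cons[of t lam] beta_lt[OF p, of _ t] M_def by auto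
      have r2: "beta (t' - 1) (tl lam') = beta t' lam' - {M'}"
        using beta_cons[of t' lam'] beta_lt[OF p', of _ t'] M'_def by auto
      have "beta (t - 1) (tl lam) = beta (t' - 1) (tl lam')" using r1 r2 eq MM by simp
      moreover have "length (tl lam) + length (tl lam') < n" using n False by (cases lam; cases lam'; auto)
      ultimately have ih: "tl lam = tl lam' \<and> t - 1 = t' - 1"
        using less.IH is_partition_tl[OF p] is_partition_tl[OF p'] by blast
      then have tt: "t = t'" by simp
      have h: "pnth lam 0 = pnth lam' 0" using MM tt M_def M'_def by simp
      have "lam \<noteq> []" "lam' \<noteq> []"
      proof -
        show "lam \<noteq> []"
        proof
          assume "lam = []"
          then have "lam' \<noteq> []" "tl lam' = []" using False ih by auto
          then show False using h pnth_pos[OF p'] \<open>lam = []\<close> by (simp add: pnth_def)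
        qed
        show "lam' \<noteq> []"
        proof
          assume "lam' = []"
          then have "lam \<noteq> []" "tl lam = []" using False ih by auto
          then show False using h pnth_pos[OF p] \<open>lam' = []\<close> by (simp add: pnth_def)
        qed
      qed
      then have "lam = lam'" using ih h by (cases lam; cases lam'; auto simp: pnth_def)
      then show ?thesis using tt by simp
    qed
  qed
qed

lemma beta_inj: "is_partition lam \<Longrightarrow> is_partition lam' \<Longrightarrow> beta t lam = beta t' lam' \<Longrightarrow> lam = lam' \<and> t = t'"
  using beta_inj_aux by blast




lemma beta_ex_aux:
  "\<forall>C. (\<forall>x\<le>L. x \<in> C) \<longrightarrow> finite {x\<in>C. L < x} \<longrightarrow> card {x\<in>C. L < x} = n \<longrightarrow>
     (\<exists>t lam. is_partition lam \<and> beta t lam = C)"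
proof (induction n)
  case 0
  show ?case
  proof (intro allI impI)
    fix C :: "int set" assume a: "\<forall>x\<le>L. x \<in> C" "finite {x\<in>C. L < x}" "card {x\<in>C. L < x} = 0"
    then have "{x\<in>C. L < x} = {}" by simp
    then have "C = {x. x < L + 1}" using a(1) by force
    then have "beta (L+1) [] = C" by (simp add: beta_Nil)
    moreover have "is_partition []" by (simp add: is_partition_def)
    ultimately show "\<exists>t lam. is_partition lam \<and> beta t lam = C" by blast
  qed
next
  case (Suc n)
  show ?case
  proof (intro allI impI)
    fix C :: "int set" assume a: "\<forall>x\<le>L. x \<in> C" "finite {x\<in>C. L < x}" "card {x\<in>C. L < x} = Suc n"
    define F where "F = {x\<in>C. L < x}"
    have Fne: "F \<noteq> {}" using a(3) F_def by (metis card.empty nat.distinct(1))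
    define m where "m = Max F"
    have mF: "m \<in> F" using Fne a(2) F_def m_def Max_in by blast
    have mmax: "\<forall>x\<in>F. x \<le> m" using a(2) F_def m_def Max_ge by blast
    define C' where "C' = C - {m}"
    have F': "{x\<in>C'. L < x} = F - {m}" using C'_def F_def by auto
    have "\<forall>x\<le>L. x \<in> C'" using a(1) mF F_def C'_def by auto
    moreover have "finite {x\<in>C'. L < x}" using F' a(2) F_def by simp
    moreover have "card {x\<in>C'. L < x} = n" using F' a(2,3) F_def mF by simp
    ultimately obtain t' lam' where p': "is_partition lam'" and b': "beta t' lam' = C'"
      using Suc.IH by blast
    have below: "\<forall>x\<in>C'. x < m"
    proof
      fix x assume "x \<in> C'"
      then have "x \<in> C" "x \<noteq> m" using C'_def by auto
      then show "x < m" using mmax mF F_def by (cases "L < x") force+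
    qed
    have M0: "int (pnth lam' 0) - 1 + t' \<in> C'" using b' beta_cons[of t' lam'] by auto
    then have lt: "int (pnth lam' 0) - 1 + t' < m" using below by auto
    have CC: "C = insert m C'" using mF F_def C'_def by auto
    show "\<exists>t lam. is_partition lam \<and> beta t lam = C"
    proof (cases "m = t'")
      case True
      then have "pnth lam' 0 = 0" using lt by simp
      then have "lam' = []" using pnth_pos[OF p'] by (metis less_irrefl)
      then have "beta (t'+1) [] = C" using beta_cons[of "t'+1" "[]"] CC b' True by (simp add: pnth_def)
      moreover have "is_partition []" by (simp add: is_partition_def)
      ultimately show ?thesis by blast
    next
      case False
      have mt: "m > t'" using lt False by simp
      define lam where "lam = nat (m - t') # lam'"
      have "\<forall>y\<in>set lam'. y \<le> nat (m - t')"
      proof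
        fix y assume y: "y \<in> set lam'"
        then obtain j where j: "j < length lam'" "lam' ! j = y" by (metis in_set_conv_nth)
        have "pnth lam' j \<le> pnth lam' 0" using pnth_mono[OF p', of 0 j] by simp
        then have "y \<le> pnth lam' 0" using j by (simp add: pnth_def)
        then show "y \<le> nat (m - t')" using lt by simp
      qed
      then have p: "is_partition lam" using p' mt unfolding is_partition_def lam_def by auto
      have "beta (t'+1) lam = C" using beta_cons[of "t'+1" lam] CC b' mt
        by (simp add: lam_def pnth_def)
      then show ?thesis using p by blast
    qed
  qed
qed

lemma beta_ex: "isb C \<Longrightarrow> \<exists>t lam. is_partition lam \<and> beta t lam = C"
proof -
  assume "isb C"
  then obtain L U where L: "\<forall>x\<le>L. x \<in> C" and U: "\<forall>x\<in>C. x \<le> U" unfolding isb_def by blast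
  have "{x\<in>C. L < x} \<subseteq> {L<..U}" using U by auto
  then have "finite {x\<in>C. L < x}" using finite_subset by blast
  then show ?thesis using beta_ex_aux L by blast
qed

lemma beta_inv_beta: "is_partition lam \<Longrightarrow> beta_inv (beta t lam) = (lam, t)"
  unfolding beta_inv_def
  by (rule the_equality) (auto dest: beta_inj)

lemma beta_inv_isb: "isb C \<Longrightarrow> is_partition (fst (beta_inv C)) \<and> beta (snd (beta_inv C)) (fst (beta_inv C)) = C"
  using beta_ex beta_inv_beta by fastforce

lemma fin_ge: "is_partition lam \<Longrightarrow> finite {c\<in>beta t lam. M \<le> c}"
proof -
  assume p: "is_partition lam"
  have "{c\<in>beta t lam. M \<le> c} \<subseteq> {M..int (pnth lam 0) - 1 + t}" using beta_le[OF p] by auto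
  then show ?thesis using finite_subset by blast
qed

lemma charge_count:
  "is_partition lam \<Longrightarrow> M \<le> t - int (length lam) \<Longrightarrow> card {c\<in>beta t lam. M \<le> c} = nat (t - M)"
proof (induction lam arbitrary: t)
  case Nil
  have "{c\<in>beta t []. M \<le> c} = {M..<t}" by (auto simp: beta_Nil)
  then show ?case by simp
next
  case (Cons a lam)
  have p: "is_partition lam" using is_partition_tl[OF Cons.prems(1)] by simp
  have a0: "a > 0" using Cons.prems(1) by (simp add: is_partition_def)
  have ih: "card {c\<in>beta (t-1) lam. M \<le> c} = nat (t - 1 - M)" using Cons.IH[OF p] Cons.prems(2) by simp
  define z where "z = int a - 1 + t"
  have bc: "beta t (a # lam) = insert z (beta (t-1) lam)" using beta_cons[of t "a#lam"] z_def by (simp add: pnth_def)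
  have zn: "z \<notin> beta (t-1) lam" using beta_lt[OF Cons.prems(1), of z t] z_def by (auto simp: pnth_def)
  have "{c\<in>beta t (a # lam). M \<le> c} = insert z {c\<in>beta (t-1) lam. M \<le> c}"
    using bc a0 Cons.prems(2) z_def by auto
  then have "card {c\<in>beta t (a # lam). M \<le> c} = Suc (card {c\<in>beta (t-1) lam. M \<le> c})"
    using zn fin_ge[OF p] by simp
  then show ?case using ih Cons.prems(2) by simp
qed

lemma charge_diff:
  assumes p: "is_partition lam" and p': "is_partition lam'"
    and fA: "finite A" and fA': "finite A'" and sub: "A \<subseteq> beta t lam" and dis: "A' \<inter> beta t lam = {}"
    and eq: "beta t' lam' = (beta t lam - A) \<union> A'"
  shows "t' + int (card A) = t + int (card A')"
proof -
  obtain M0 where M0: "\<forall>x\<in>A \<union> A'. M0 \<le> x"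
    using fA fA' bdd_below_finite[of "A \<union> A'"] unfolding bdd_below_def by blast
  define M where "M = min M0 (min (t - int (length lam)) (t' - int (length lam')))"
  have M: "\<forall>x\<in>A \<union> A'. M \<le> x" using M0 M_def by force
  define S where "S = {c\<in>beta t lam. M \<le> c}"
  have S': "{c\<in>beta t' lam'. M \<le> c} = (S - A) \<union> A'" using eq M S_def sub by auto
  have AS: "A \<subseteq> S" using sub M S_def by auto
  have fS: "finite S" using fin_ge[OF p] S_def by simp
  have "card ((S - A) \<union> A') = card (S - A) + card A'"
    using dis S_def fS fA' by (subst card_Un_disjoint) auto
  also have "card (S - A) = card S - card A" using AS fA by (simp add: card_Diff_subset)
  finally have c: "card {c\<in>beta t' lam'. M \<le> c} = card S - card A + card A'" using S' by simp
  have "card A \<le> card S" using AS fS card_mono by blast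
  moreover have "card S = nat (t - M)" using charge_count[OF p] M_def S_def by simp
  moreover have "card {c\<in>beta t' lam'. M \<le> c} = nat (t' - M)" using charge_count[OF p'] M_def by simp
  moreover have "t - M \<ge> 0" "t' - M \<ge> 0" using M_def by auto
  ultimately show ?thesis using c by linarith
qed




lemma dm_lin: fixes a p u :: int assumes "0 \<le> u" "u < p"
  shows "(a*p+u) div p = a" "(a*p+u) mod p = u"
proof -
  have p: "p \<noteq> 0" using assms by simp
  have "(a*p+u) div p = a + u div p" using p by (metis add.commute div_mult_self3 mult.commute)
  then show "(a*p+u) div p = a" using assms by simp
  have "(a*p+u) mod p = u mod p" using p by (metis add.commute mod_mult_self3 mult.commute)
  then show "(a*p+u) mod p = u" using assms by simp
qed

lemma swap_move:
  fixes p q u1 u2 b1 b2 h :: int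
  assumes p: "p > 0" and q: "q > 0" and u1: "0 \<le> u1" "u1 < p" and u2: "0 \<le> u2" "u2 < p"
    and bm: "b1 mod q = b2 mod q" and h: "h > 0" and nd: "(u1, b1) \<noteq> (u2, b2)"
  shows "\<exists>v1 v2 c1 c2 h'. 0 \<le> v1 \<and> v1 < q \<and> 0 \<le> v2 \<and> v2 < q \<and> c1 mod p = c2 mod p \<and> h' > 0 \<and>
    (((c1 div p, c1 mod p, v1) = (b1 div q, u1, b1 mod q) \<and>
      ((c1+h') div p, (c1+h') mod p, v1) = (b2 div q, u2, b2 mod q) \<and>
      (c2 div p, c2 mod p, v2) = ((b1+h) div q, u1, (b1+h) mod q) \<and>
      ((c2+h') div p, (c2+h') mod p, v2) = ((b2+h) div q, u2, (b2+h) mod q)) \<or>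
     ((c1 div p, c1 mod p, v1) = ((b2+h) div q, u2, (b2+h) mod q) \<and>
      ((c1+h') div p, (c1+h') mod p, v1) = ((b1+h) div q, u1, (b1+h) mod q) \<and>
      (c2 div p, c2 mod p, v2) = (b2 div q, u2, b2 mod q) \<and>
      ((c2+h') div p, (c2+h') mod p, v2) = (b1 div q, u1, b1 mod q)))"
proof -
  define j where "j = b1 mod q"
  define j' where "j' = (b1+h) mod q"
  define a1 where "a1 = b1 div q"
  define a2 where "a2 = b2 div q"
  define a1' where "a1' = (b1+h) div q"
  define a2' where "a2' = (b2+h) div q"
  have j2: "b2 mod q = j" using bm j_def by simp
  have j2': "(b2+h) mod q = j'" using bm j'_def by (metis mod_add_left_eq)
  have e1: "b1 = a1*q + j" using a1_def j_def by simp
  have e2: "b2 = a2*q + j" using a2_def j2 by (metis div_mult_mod_eq)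
  have e1': "b1 + h = a1'*q + j'" using a1'_def j'_def by simp
  have e2': "b2 + h = a2'*q + j'" using a2'_def j2' by (metis div_mult_mod_eq)
  have "(a1' - a1) * q = (a2' - a2) * q" using e1 e2 e1' e2' by (simp add: algebra_simps)
  then have aa: "a2' = a1' + a2 - a1" using q by simp
  have jr: "0 \<le> j" "j < q" "0 \<le> j'" "j' < q" using q j_def j'_def by auto
  define H where "H = (a2 - a1)*p + u2 - u1"
  have "H \<noteq> 0"
  proof
    assume "H = 0"
    then have "a1*p + u1 = a2*p + u2" using H_def by (simp add: algebra_simps)
    then have "a1 = a2" "u1 = u2" using dm_lin[OF u1, of a1] dm_lin[OF u2, of a2] by metis+
    then show False using nd e1 e2 by simp
  qed
  then consider "H > 0" | "H < 0" by linarith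
  then show ?thesis
  proof cases
    case 1
    have c1: "a1*p + u1 + H = a2*p + u2" using H_def by (simp add: algebra_simps)
    have c2: "a1'*p + u1 + H = a2'*p + u2" unfolding aa H_def by (simp add: algebra_simps)
    show ?thesis
      apply (rule exI[of _ j], rule exI[of _ j'], rule exI[of _ "a1*p+u1"], rule exI[of _ "a1'*p+u1"], rule exI[of _ H])
      using 1 jr c1 c2 dm_lin[OF u1, of a1] dm_lin[OF u2, of a2] dm_lin[OF u1, of a1'] dm_lin[OF u2, of a2']
      unfolding a1_def[symmetric] a2_def[symmetric] a1'_def[symmetric] a2'_def[symmetric] j_def[symmetric] j'_def[symmetric] j2 j2'
      by (simp only: prod.inject) simp
  next
    case 2
    have c1: "a2'*p + u2 + - H = a1'*p + u1" unfolding aa H_def by (simp add: algebra_simps)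
    have c2: "a2*p + u2 + - H = a1*p + u1" using H_def by (simp add: algebra_simps)
    show ?thesis
      apply (rule exI[of _ j'], rule exI[of _ j], rule exI[of _ "a2'*p+u2"], rule exI[of _ "a2*p+u2"], rule exI[of _ "-H"])
      using 2 jr c1 c2 dm_lin[OF u1, of a1] dm_lin[OF u2, of a2] dm_lin[OF u1, of a1'] dm_lin[OF u2, of a2']
      unfolding a1_def[symmetric] a2_def[symmetric] a1'_def[symmetric] a2'_def[symmetric] j_def[symmetric] j'_def[symmetric] j2 j2'
      by (simp only: prod.inject) simp
  qed
qed




lemma gm_iff:
  fixes pt :: "nat \<Rightarrow> int \<Rightarrow> int"
  assumes cX: "config_ok m X" and cY: "config_ok m Y"
    and inj: "\<And>k k' b b'. k<m \<Longrightarrow> k'<m \<Longrightarrow> pt k b = pt k' b' \<longleftrightarrow> (k = k' \<and> b = b')"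
    and surj: "\<And>y. \<exists>k<m. \<exists>b. y = pt k b"
    and SX: "\<And>k. k<m \<Longrightarrow> cbeta X k = {b. pt k b \<in> Bl}"
    and SY: "\<And>k. k<m \<Longrightarrow> cbeta Y k = {b. pt k b \<in> Bm}"
    and pl: "is_partition rl" and pm: "is_partition rm" and Bl: "Bl = beta s rl" and Bm: "Bm = beta s rm"
  shows "move2 N X Y \<longleftrightarrow> (\<exists>k1<m. \<exists>k2<m. \<exists>b1 b2 h. b1 mod int N = b2 mod int N \<and> h > 0 \<and>
      pt k1 b1 \<in> Bl \<and> pt k1 (b1+h) \<notin> Bl \<and> pt k2 b2 \<notin> Bl \<and> pt k2 (b2+h) \<in> Bl \<and>
      Bm = (Bl - {pt k1 b1, pt k2 (b2+h)}) \<union> {pt k1 (b1+h), pt k2 b2})"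
proof
  assume "move2 N X Y"
  then obtain m' k1 k2 b1 b2 h where m': "config_ok m' X" and k1: "k1 < m'" and k2: "k2 < m'"
    and c: "b1 mod int N = b2 mod int N" "h > 0"
     "b1 \<in> cbeta X k1" "b1 + h \<notin> cbeta X k1" "b2 \<notin> cbeta X k2" "b2 + h \<in> cbeta X k2"
    and eq: "\<forall>k<m'. cbeta Y k =
           (cbeta X k - ((if k = k1 then {b1} else {}) \<union> (if k = k2 then {b2 + h} else {})))
             \<union> ((if k = k1 then {b1 + h} else {}) \<union> (if k = k2 then {b2} else {}))"
    unfolding move2_def by blast
  have mm: "m' = m" using m' cX unfolding config_ok_def by simp
  note k1 = k1[unfolded mm] and k2 = k2[unfolded mm] and eq = eq[unfolded mm]
  have mem: "pt k1 b1 \<in> Bl" "pt k1 (b1+h) \<notin> Bl" "pt k2 b2 \<notin> Bl" "pt k2 (b2+h) \<in> Bl"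
    using c SX[OF k1] SX[OF k2] by auto
  have "y \<in> Bm \<longleftrightarrow> y \<in> (Bl - {pt k1 b1, pt k2 (b2+h)}) \<union> {pt k1 (b1+h), pt k2 b2}" for y
  proof -
    obtain k b where k: "k < m" and y: "y = pt k b" using surj by blast
    have "y \<in> Bm \<longleftrightarrow> b \<in> cbeta Y k" using SY[OF k] y by simp
    also have "\<dots> \<longleftrightarrow> b \<in> (cbeta X k - ((if k = k1 then {b1} else {}) \<union> (if k = k2 then {b2 + h} else {})))
             \<union> ((if k = k1 then {b1 + h} else {}) \<union> (if k = k2 then {b2} else {}))" using eq k by simp
    also have "\<dots> \<longleftrightarrow> y \<in> (Bl - {pt k1 b1, pt k2 (b2+h)}) \<union> {pt k1 (b1+h), pt k2 b2}"
      using SX[OF k] y inj[OF k k1] inj[OF k k2] by auto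
    finally show ?thesis .
  qed
  then have "Bm = (Bl - {pt k1 b1, pt k2 (b2+h)}) \<union> {pt k1 (b1+h), pt k2 b2}" by blast
  then show "\<exists>k1<m. \<exists>k2<m. \<exists>b1 b2 h. b1 mod int N = b2 mod int N \<and> h > 0 \<and>
      pt k1 b1 \<in> Bl \<and> pt k1 (b1+h) \<notin> Bl \<and> pt k2 b2 \<notin> Bl \<and> pt k2 (b2+h) \<in> Bl \<and>
      Bm = (Bl - {pt k1 b1, pt k2 (b2+h)}) \<union> {pt k1 (b1+h), pt k2 b2}"
    using k1 k2 c(1,2) mem by blast
next
  assume "\<exists>k1<m. \<exists>k2<m. \<exists>b1 b2 h. b1 mod int N = b2 mod int N \<and> h > 0 \<and>
      pt k1 b1 \<in> Bl \<and> pt k1 (b1+h) \<notin> Bl \<and> pt k2 b2 \<notin> Bl \<and> pt k2 (b2+h) \<in> Bl \<and>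
      Bm = (Bl - {pt k1 b1, pt k2 (b2+h)}) \<union> {pt k1 (b1+h), pt k2 b2}"
  then obtain k1 k2 b1 b2 h where k1: "k1 < m" and k2: "k2 < m" and c: "b1 mod int N = b2 mod int N" "h > 0"
    and mem: "pt k1 b1 \<in> Bl" "pt k1 (b1+h) \<notin> Bl" "pt k2 b2 \<notin> Bl" "pt k2 (b2+h) \<in> Bl"
    and G: "Bm = (Bl - {pt k1 b1, pt k2 (b2+h)}) \<union> {pt k1 (b1+h), pt k2 b2}" by blast
  have cm: "b1 \<in> cbeta X k1" "b1 + h \<notin> cbeta X k1" "b2 \<notin> cbeta X k2" "b2 + h \<in> cbeta X k2"
    using mem SX[OF k1] SX[OF k2] by auto
  define A where "A k = (if k = k1 then {b1} else {}) \<union> (if k = k2 then {b2 + h} else {})" for k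
  define A' where "A' k = (if k = k1 then {b1 + h} else {}) \<union> (if k = k2 then {b2} else {})" for k
  have PC: "cbeta Y k = (cbeta X k - A k) \<union> A' k" if k: "k < m" for k
  proof -
    have "b \<in> cbeta Y k \<longleftrightarrow> b \<in> (cbeta X k - A k) \<union> A' k" for b
      using SX[OF k] SY[OF k] G inj[OF k k1] inj[OF k k2] unfolding A_def A'_def by auto
    then show ?thesis by blast
  qed
  have glob: "s + int (card {pt k1 b1, pt k2 (b2+h)}) = s + int (card {pt k1 (b1+h), pt k2 b2})"
    using charge_diff[OF pl pm, of "{pt k1 b1, pt k2 (b2+h)}" "{pt k1 (b1+h), pt k2 b2}" s s] mem G Bl Bm
    by auto
  have cardA: "card (A k) = card (A' k)" if k: "k < m" for k
  proof (cases "k = k1 \<and> k = k2")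
    case True
    have "card {pt k1 b1, pt k2 (b2+h)} = card {b1, b2+h}"
      using True inj[OF k1 k1] by (cases "b1 = b2 + h") auto
    moreover have "card {pt k1 (b1+h), pt k2 b2} = card {b1+h, b2}"
      using True inj[OF k1 k1] by (cases "b1 + h = b2") auto
    ultimately show ?thesis using glob True unfolding A_def A'_def by (simp add: insert_commute)
  next
    case False then show ?thesis unfolding A_def A'_def by auto
  qed
  have sn: "snd X = snd Y"
  proof (rule nth_equalityI)
    show "length (snd X) = length (snd Y)" using cX cY unfolding config_ok_def by simp
    fix k assume "k < length (snd X)"
    then have k: "k < m" using cX unfolding config_ok_def by simp
    have px: "is_partition (fst X ! k)" and py: "is_partition (fst Y ! k)" using cX cY k unfolding config_ok_def by auto
    have "snd Y ! k + int (card (A k)) = snd X ! k + int (card (A' k))"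
      apply (rule charge_diff[OF px py])
      using PC[OF k] cm unfolding A_def A'_def cbeta_def by auto
    then show "snd X ! k = snd Y ! k" using cardA[OF k] by simp
  qed
  show "move2 N X Y" unfolding move2_def
    apply (rule exI[of _ m])
    using cX cY sn k1 k2 c cm PC unfolding A_def A'_def by blast
qed




lemma sm_pos: fixes f :: "int \<Rightarrow> int" assumes sm: "\<And>x y. x < y \<Longrightarrow> f x < f y"
  shows "f (int n) \<ge> f 0 + int n" "f (- int n) \<le> f 0 - int n"
proof -
  show "f (int n) \<ge> f 0 + int n"
  proof (induction n)
    case (Suc n)
    have "f (int n) < f (int (Suc n))" by (rule sm) simp
    then show ?case using Suc.IH by simp
  qed simp
  show "f (- int n) \<le> f 0 - int n"
  proof (induction n)
    case (Suc n)
    have "f (- int (Suc n)) < f (- int n)" by (rule sm) simp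
    moreover have "int (Suc n) = int n + 1" by simp
    ultimately show ?case using Suc.IH by linarith
  qed simp
qed

lemma sm_bounds: fixes f :: "int \<Rightarrow> int" assumes sm: "\<And>x y. x < y \<Longrightarrow> f x < f y"
  shows "x \<ge> 0 \<Longrightarrow> f x \<ge> f 0 + x" "x \<le> 0 \<Longrightarrow> f x \<le> f 0 + x"
proof -
  assume "x \<ge> 0" then show "f x \<ge> f 0 + x" using sm_pos(1)[OF sm, where n="nat x"] by simp
next
  assume "x \<le> 0" then show "f x \<le> f 0 + x" using sm_pos(2)[OF sm, where n="nat (-x)"] by simp
qed

lemma sm_isb: fixes f :: "int \<Rightarrow> int" assumes sm: "\<And>x y. x < y \<Longrightarrow> f x < f y" and B: "isb B"
  shows "isb {x. f x \<in> B}"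
proof -
  obtain L U where L: "\<forall>x\<le>L. x \<in> B" and U: "\<forall>x\<in>B. x \<le> U" using B unfolding isb_def by blast
  have "\<forall>x\<le>min 0 (L - f 0). f x \<in> B"
  proof (intro allI impI)
    fix x assume "x \<le> min 0 (L - f 0)"
    then show "f x \<in> B" using sm_bounds(2)[of f x, OF sm] L by simp
  qed
  moreover have "\<forall>x\<in>{x. f x \<in> B}. x \<le> max 0 (U - f 0)"
  proof
    fix x assume "x \<in> {x. f x \<in> B}"
    then have "f x \<le> U" using U by simp
    then show "x \<le> max 0 (U - f 0)" using sm_bounds(1)[of f x, OF sm] by (cases "x \<ge> 0") auto
  qed
  ultimately show ?thesis unfolding isb_def by (metis mem_Collect_eq)
qed

lemma runner_eq: assumes e: "e > 0" and i: "i < e"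
  shows "runner_set e B i = {c. c * int e + int i \<in> B}"
proof -
  have "x \<in> runner_set e B i \<longleftrightarrow> x * int e + int i \<in> B" for x
  proof
    assume "x \<in> runner_set e B i"
    then obtain b where b: "b \<in> B" "b mod int e = int i" "x = (b - int i) div int e"
      unfolding runner_set_def by auto
    have "(b - int i) mod int e = 0" using b(2) by (simp add: mod_diff_left_eq[symmetric])
    then have "x * int e = b - int i" using b(3) by (metis div_mult_mod_eq add_0_right)
    then show "x * int e + int i \<in> B" using b(1) by simp
  next
    assume a: "x * int e + int i \<in> B"
    have "(x * int e + int i) mod int e = int i" "(x * int e + int i - int i) div int e = x"
      using dm_lin[of "int i" "int e" x] e i by auto
    then show "x \<in> runner_set e B i" using a unfolding runner_set_def by force
  qed
  then show ?thesis by blast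
qed

lemma eta_props: assumes e: "e > 0" and p: "is_partition lam"
  shows "config_ok e (eta e lam s)" "\<And>i. i < e \<Longrightarrow> cbeta (eta e lam s) i = {c. c * int e + int i \<in> beta s lam}"
proof -
  have isb: "isb (runner_set e (beta s lam) i)" if "i < e" for i
  proof -
    have "isb {c. c * int e + int i \<in> beta s lam}"
      by (rule sm_isb[OF _ beta_isb[OF p]]) (use e in simp)
    then show ?thesis using runner_eq[OF e that] by simp
  qed
  show "config_ok e (eta e lam s)" unfolding config_ok_def eta_def
    using beta_inv_isb[OF isb] by simp
  fix i assume i: "i < e"
  show "cbeta (eta e lam s) i = {c. c * int e + int i \<in> beta s lam}"
    unfolding cbeta_def eta_def using beta_inv_isb[OF isb[OF i]] runner_eq[OF e i] i by simp
qed

lemma psi_eq: "psi e r (k+1) x = ((x div int e) * int r + (int r - 1 - int k)) * int e + x mod int e"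
  unfolding psi_def by (simp add: algebra_simps)

lemma psi_dec: assumes e: "e > 0" and r: "r > 0" and k: "k < r"
  shows "psi e r (k+1) x div int e div int r = x div int e"
    "psi e r (k+1) x div int e mod int r = int r - 1 - int k"
    "psi e r (k+1) x mod int e = x mod int e"
proof -
  have m: "0 \<le> x mod int e" "x mod int e < int e" using e by auto
  have kk: "0 \<le> int r - 1 - int k" "int r - 1 - int k < int r" using k by auto
  note d = dm_lin[OF m, of "(x div int e) * int r + (int r - 1 - int k)"]
  show "psi e r (k+1) x mod int e = x mod int e" using d psi_eq by simp
  show "psi e r (k+1) x div int e div int r = x div int e" using d psi_eq dm_lin[OF kk] by simp
  show "psi e r (k+1) x div int e mod int r = int r - 1 - int k" using d psi_eq dm_lin[OF kk] by simp
qed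

lemma psi_inj: assumes e: "e > 0" and r: "r > 0" and k: "k < r" and k': "k' < r"
  shows "psi e r (k+1) x = psi e r (k'+1) x' \<longleftrightarrow> (k = k' \<and> x = x')"
proof
  assume a: "psi e r (k+1) x = psi e r (k'+1) x'"
  have "x div int e = x' div int e" "x mod int e = x' mod int e" "int r - 1 - int k = int r - 1 - int k'"
    using psi_dec[OF e r k, of x] psi_dec[OF e r k', of x'] a by metis+
  then have "k = k'" "x = x'" by simp_all (metis div_mult_mod_eq)
  then show "k = k' \<and> x = x'" by simp
qed simp

lemma psi_surj: assumes e: "e > 0" and r: "r > 0"
  shows "\<exists>k<r. \<exists>x. y = psi e r (k+1) x"
proof -
  define c where "c = y div int e"
  define i where "i = y mod int e"
  define a where "a = c div int r"
  define j where "j = c mod int r"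
  have i: "0 \<le> i" "i < int e" using e i_def by auto
  have j: "0 \<le> j" "j < int r" using r j_def by auto
  define k where "k = nat (int r - 1 - j)"
  have k: "k < r" "int r - 1 - int k = j" using j k_def by auto
  have "psi e r (k+1) (a * int e + i) = (a * int r + j) * int e + i"
    using psi_eq[of e r k] dm_lin[OF i, of a] k by simp
  also have "\<dots> = y" using a_def j_def c_def i_def by simp
  finally show ?thesis using k by metis
qed

lemma psi_sm: assumes e: "e > 0" and r: "r > 0" and k: "k < r"
  shows "x < x' \<Longrightarrow> psi e r (k+1) x < psi e r (k+1) x'"
proof -
  assume xx: "x < x'"
  define a where "a = x div int e"
  define a' where "a' = x' div int e"
  have aa: "a \<le> a'" using xx a_def a'_def zdiv_mono1[of x x' "int e"] e by simp
  have P: "psi e r (k+1) z = (z div int e) * (int r * int e) + (int r - 1 - int k) * int e + z mod int e" for z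
    using psi_eq[of e r k z] by (simp add: algebra_simps)
  show "psi e r (k+1) x < psi e r (k+1) x'"
  proof (cases "a = a'")
    case True
    then have "x mod int e < x' mod int e" using xx a_def a'_def by (metis div_mult_mod_eq add_less_cancel_left)
    then show ?thesis using P[of x] P[of x'] True a_def a'_def by simp
  next
    case False
    then have "a + 1 \<le> a'" using aa by simp
    then have "(a + 1) * (int r * int e) \<le> a' * (int r * int e)" using e r by (intro mult_right_mono) auto
    moreover have "1 * int e \<le> int r * int e" using r by (intro mult_right_mono) auto
    moreover have "x mod int e < int e" "0 \<le> x' mod int e" using e by auto
    ultimately show ?thesis using P[of x] P[of x'] a_def a'_def by (simp add: algebra_simps)
  qed
qed




lemma psi_mono: assumes e: "e > 0" and r: "r > 0" and k: "k < r"
  shows "x \<le> x' \<Longrightarrow> psi e r (k+1) x \<le> psi e r (k+1) x'"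
  using psi_sm[OF e r k, of x x'] by (cases "x = x'") auto

lemma Phi_props: assumes e: "e > 0" and r: "r > 0" and p: "is_partition lam"
  shows "config_ok r (Phi e r lam s)" "\<And>k. k < r \<Longrightarrow> cbeta (Phi e r lam s) k = {x. psi e r (k+1) x \<in> beta s lam}"
proof -
  define B where "B = beta s lam"
  define D where "D k = {x. psi e r (k+1) x \<in> B}" for k
  have isbD: "isb (D k)" if "k < r" for k
    unfolding D_def B_def by (rule sm_isb[OF _ beta_isb[OF p]]) (rule psi_sm[OF e r that])
  define X0 where "X0 = (map (\<lambda>k. fst (beta_inv (D k))) [0..<r], map (\<lambda>k. snd (beta_inv (D k))) [0..<r])"
  have cX0: "config_ok r X0" unfolding config_ok_def X0_def using beta_inv_isb[OF isbD] by simp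
  have cb0: "cbeta X0 k = D k" if "k < r" for k
    unfolding cbeta_def X0_def using beta_inv_isb[OF isbD[OF that]] that by simp
  have UB: "(\<Union>k<r. psi e r (k + 1) ` cbeta X0 k) = B"
  proof
    show "(\<Union>k<r. psi e r (k + 1) ` cbeta X0 k) \<subseteq> B" using cb0 D_def by auto
    show "B \<subseteq> (\<Union>k<r. psi e r (k + 1) ` cbeta X0 k)"
    proof
      fix y assume y: "y \<in> B"
      obtain k x where k: "k < r" and x: "y = psi e r (k+1) x" using psi_surj[OF e r] by blast
      then show "y \<in> (\<Union>k<r. psi e r (k + 1) ` cbeta X0 k)" using y cb0[OF k] D_def by auto
    qed
  qed
  have Psi0: "config_ok r X0 \<and> Psi e r X0 = (lam, s)"
    using cX0 UB beta_inv_beta[OF p] unfolding Psi_def B_def by simp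
  have uniq: "Y = X0" if cY: "config_ok r Y" and PY: "Psi e r Y = (lam, s)" for Y
  proof -
    define UY where "UY = (\<Union>k<r. psi e r (k + 1) ` cbeta Y k)"
    have isbY: "isb (cbeta Y k)" if "k < r" for k
      using cY that beta_isb unfolding config_ok_def cbeta_def by auto
    have "\<forall>k\<in>{..<r}. \<exists>L. \<forall>x\<le>L. x \<in> cbeta Y k" using isbY unfolding isb_def by auto
    then obtain Lf where Lf: "\<forall>k\<in>{..<r}. \<forall>x\<le>Lf k. x \<in> cbeta Y k" using bchoice by metis
    have "\<forall>k\<in>{..<r}. \<exists>U. \<forall>x\<in>cbeta Y k. x \<le> U" using isbY unfolding isb_def by auto
    then obtain Uf where Uf: "\<forall>k\<in>{..<r}. \<forall>x\<in>cbeta Y k. x \<le> Uf k" using bchoice by metis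
    define LL where "LL = Min ((\<lambda>k. psi e r (k+1) (Lf k)) ` {..<r})"
    define UU where "UU = Max ((\<lambda>k. psi e r (k+1) (Uf k)) ` {..<r})"
    have "\<forall>y\<le>LL. y \<in> UY"
    proof (intro allI impI)
      fix y assume y: "y \<le> LL"
      obtain k x where k: "k < r" and x: "y = psi e r (k+1) x" using psi_surj[OF e r] by blast
      have "LL \<le> psi e r (k+1) (Lf k)" unfolding LL_def using k by simp
      then have "x \<le> Lf k" using psi_sm[OF e r k, of "Lf k" x] x y by (cases "x \<le> Lf k") auto
      then show "y \<in> UY" using Lf k x unfolding UY_def by auto
    qed
    moreover have "\<forall>y\<in>UY. y \<le> UU"
    proof
      fix y assume "y \<in> UY"
      then obtain k x where k: "k < r" and x: "x \<in> cbeta Y k" and y: "y = psi e r (k+1) x"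
        unfolding UY_def by auto
      have "y \<le> psi e r (k+1) (Uf k)" using psi_mono[OF e r k] Uf k x y by auto
      also have "\<dots> \<le> UU" unfolding UU_def using k by simp
      finally show "y \<le> UU" .
    qed
    ultimately have "isb UY" unfolding isb_def by blast
    from beta_inv_isb[OF this] PY have UYB: "UY = B" unfolding Psi_def UY_def B_def by simp
    have cbY: "cbeta Y k = D k" if k: "k < r" for k
    proof -
      have "x \<in> cbeta Y k \<longleftrightarrow> psi e r (k+1) x \<in> UY" for x
        unfolding UY_def using psi_inj[OF e r k] k by auto
      then show ?thesis using UYB D_def by auto
    qed
    have eqk: "fst Y ! k = fst X0 ! k \<and> snd Y ! k = snd X0 ! k" if k: "k < r" for k
    proof (rule beta_inj)
      show "is_partition (fst Y ! k)" using cY k unfolding config_ok_def by auto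
      show "is_partition (fst X0 ! k)" using cX0 k unfolding config_ok_def by auto
      show "beta (snd Y ! k) (fst Y ! k) = beta (snd X0 ! k) (fst X0 ! k)"
        using cbY[OF k] cb0[OF k] unfolding cbeta_def by simp
    qed
    have "fst Y = fst X0" using cY cX0 eqk unfolding config_ok_def by (intro nth_equalityI) auto
    moreover have "snd Y = snd X0" using cY cX0 eqk unfolding config_ok_def by (intro nth_equalityI) auto
    ultimately show "Y = X0" by (simp add: prod_eq_iff)
  qed
  have PhiX: "Phi e r lam s = X0" unfolding Phi_def
    using Psi0 uniq by (intro the_equality) auto
  show "config_ok r (Phi e r lam s)" using PhiX cX0 by simp
  fix k assume "k < r"
  then show "cbeta (Phi e r lam s) k = {x. psi e r (k+1) x \<in> beta s lam}" using PhiX cb0 D_def B_def by simp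
qed




lemma pt1_inj: assumes e: "e > 0" and i: "i < e" and i': "i' < e"
  shows "c * int e + int i = c' * int e + int i' \<longleftrightarrow> (i = i' \<and> c = c')"
proof
  assume a: "c * int e + int i = c' * int e + int i'"
  have i0: "0 \<le> int i" "int i < int e" "0 \<le> int i'" "int i' < int e" using i i' by auto
  have d1: "(c * int e + int i) div int e = c" "(c * int e + int i) mod int e = int i" using dm_lin[OF i0(1,2)] by auto
  have d2: "(c' * int e + int i') div int e = c'" "(c' * int e + int i') mod int e = int i'" using dm_lin[OF i0(3,4)] by auto
  have "int i = int i'" "c = c'" using d1 d2 a by metis+
  then show "i = i' \<and> c = c'" by simp
qed simp

lemma pt1_surj: assumes e: "e > 0" shows "\<exists>i<e. \<exists>c. y = c * int e + int i"
proof -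
  have "y = (y div int e) * int e + int (nat (y mod int e))" "nat (y mod int e) < e" using e
    by (simp_all add: nat_less_iff)
  then show ?thesis by blast
qed

theorem lemma2p12:
  fixes e r :: nat and lam mu :: partition and s :: int
  assumes "e \<ge> 2" and "r \<ge> 2"
    and "is_partition lam" and "is_partition mu"
    and "e_equiv e lam mu"
  shows "move2 r (eta e lam s) (eta e mu s) \<longleftrightarrow> move2 e (Phi e r lam s) (Phi e r mu s)"
proof -
  have e: "e > 0" and r: "r > 0" using assms by auto
  note pl = assms(3) and pm = assms(4)
  define Bl where "Bl = beta s lam"
  define Bm where "Bm = beta s mu"
  define pt1 where "pt1 i c = c * int e + int i" for i :: nat and c :: int
  define pt2 where "pt2 k x = psi e r (k+1) x" for k :: nat and x :: int
  have L: "move2 r (eta e lam s) (eta e mu s) \<longleftrightarrow> (\<exists>k1<e. \<exists>k2<e. \<exists>b1 b2 h. b1 mod int r = b2 mod int r \<and> h > 0 \<and>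
      pt1 k1 b1 \<in> Bl \<and> pt1 k1 (b1+h) \<notin> Bl \<and> pt1 k2 b2 \<notin> Bl \<and> pt1 k2 (b2+h) \<in> Bl \<and>
      Bm = (Bl - {pt1 k1 b1, pt1 k2 (b2+h)}) \<union> {pt1 k1 (b1+h), pt1 k2 b2})"
    apply (rule gm_iff[OF eta_props(1)[OF e pl] eta_props(1)[OF e pm] _ _ _ _ pl pm Bl_def Bm_def])
    unfolding pt1_def using pt1_inj[OF e] pt1_surj[OF e] eta_props(2)[OF e pl] eta_props(2)[OF e pm] Bl_def Bm_def
    by auto
  have R: "move2 e (Phi e r lam s) (Phi e r mu s) \<longleftrightarrow> (\<exists>k1<r. \<exists>k2<r. \<exists>b1 b2 h. b1 mod int e = b2 mod int e \<and> h > 0 \<and>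
      pt2 k1 b1 \<in> Bl \<and> pt2 k1 (b1+h) \<notin> Bl \<and> pt2 k2 b2 \<notin> Bl \<and> pt2 k2 (b2+h) \<in> Bl \<and>
      Bm = (Bl - {pt2 k1 b1, pt2 k2 (b2+h)}) \<union> {pt2 k1 (b1+h), pt2 k2 b2})"
    apply (rule gm_iff[OF Phi_props(1)[OF e r pl] Phi_props(1)[OF e r pm] _ _ _ _ pl pm Bl_def Bm_def])
    unfolding pt2_def using psi_inj[OF e r] psi_surj[OF e r] Phi_props(2)[OF e r pl] Phi_props(2)[OF e r pm] Bl_def Bm_def
    by auto
  define G where "G t = (case t of (a, u, v) \<Rightarrow> (a * int r + v) * int e + u)" for t :: "int \<times> int \<times> int"
  define H where "H t = (case t of (a, u, v) \<Rightarrow> (a * int r + u) * int e + v)" for t :: "int \<times> int \<times> int"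
  have G1: "pt1 i c = G (c div int r, int i, c mod int r)" for i c
    unfolding pt1_def G_def by simp
  have H1: "pt1 i c = H (c div int r, c mod int r, int i)" for i c
    unfolding pt1_def H_def by simp
  have G2: "pt2 k c = G (c div int e, c mod int e, int r - 1 - int k)" for k c
    unfolding pt2_def G_def using psi_eq[of e r k c] by simp
  have H2: "pt2 k c = H (c div int e, int r - 1 - int k, c mod int e)" for k c
    unfolding pt2_def H_def using psi_eq[of e r k c] by simp
  show ?thesis
  proof
    assume "move2 r (eta e lam s) (eta e mu s)"
    then obtain i1 i2 b1 b2 h where i1: "i1 < e" and i2: "i2 < e" and c: "b1 mod int r = b2 mod int r" "h > 0"
      and mem: "pt1 i1 b1 \<in> Bl" "pt1 i1 (b1+h) \<notin> Bl" "pt1 i2 b2 \<notin> Bl" "pt1 i2 (b2+h) \<in> Bl"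
      and GG: "Bm = (Bl - {pt1 i1 b1, pt1 i2 (b2+h)}) \<union> {pt1 i1 (b1+h), pt1 i2 b2}" using L by blast
    have nd: "(int i1, b1) \<noteq> (int i2, b2)"
    proof
      assume "(int i1, b1) = (int i2, b2)"
      then have "i1 = i2" "b1 = b2" by simp_all
      then show False using mem(1,3) by simp
    qed
    have pq: "int e > 0" "int r > 0" "0 \<le> int i1" "int i1 < int e" "0 \<le> int i2" "int i2 < int e" using e r i1 i2 by auto
    obtain v1 v2 c1 c2 h' where v: "0 \<le> v1" "v1 < int r" "0 \<le> v2" "v2 < int r" and cc: "c1 mod int e = c2 mod int e"
      and h': "h' > 0" and opt:
      "((c1 div int e, c1 mod int e, v1) = (b1 div int r, int i1, b1 mod int r) \<and>
      ((c1+h') div int e, (c1+h') mod int e, v1) = (b2 div int r, int i2, b2 mod int r) \<and>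
      (c2 div int e, c2 mod int e, v2) = ((b1+h) div int r, int i1, (b1+h) mod int r) \<and>
      ((c2+h') div int e, (c2+h') mod int e, v2) = ((b2+h) div int r, int i2, (b2+h) mod int r)) \<or>
     ((c1 div int e, c1 mod int e, v1) = ((b2+h) div int r, int i2, (b2+h) mod int r) \<and>
      ((c1+h') div int e, (c1+h') mod int e, v1) = ((b1+h) div int r, int i1, (b1+h) mod int r) \<and>
      (c2 div int e, c2 mod int e, v2) = (b2 div int r, int i2, b2 mod int r) \<and>
      ((c2+h') div int e, (c2+h') mod int e, v2) = (b1 div int r, int i1, b1 mod int r))"
      using swap_move[OF pq c nd] by blast
    define k1 where "k1 = nat (int r - 1 - v1)"
    define k2 where "k2 = nat (int r - 1 - v2)"
    have k: "k1 < r" "k2 < r" "int r - 1 - int k1 = v1" "int r - 1 - int k2 = v2" using v k1_def k2_def by auto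
    have P1: "pt2 k1 c = G (c div int e, c mod int e, v1)" "pt2 k2 c = G (c div int e, c mod int e, v2)" for c
      using G2 k by auto
    show "move2 e (Phi e r lam s) (Phi e r mu s)"
      unfolding R
    proof (rule exI[of _ k1], intro conjI impI, fact, rule exI[of _ k2], intro conjI impI, fact)
      from opt show "\<exists>b1 b2 h. b1 mod int e = b2 mod int e \<and> h > 0 \<and>
      pt2 k1 b1 \<in> Bl \<and> pt2 k1 (b1+h) \<notin> Bl \<and> pt2 k2 b2 \<notin> Bl \<and> pt2 k2 (b2+h) \<in> Bl \<and>
      Bm = (Bl - {pt2 k1 b1, pt2 k2 (b2+h)}) \<union> {pt2 k1 (b1+h), pt2 k2 b2}"
      proof
        assume A: "(c1 div int e, c1 mod int e, v1) = (b1 div int r, int i1, b1 mod int r) \<and>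
      ((c1+h') div int e, (c1+h') mod int e, v1) = (b2 div int r, int i2, b2 mod int r) \<and>
      (c2 div int e, c2 mod int e, v2) = ((b1+h) div int r, int i1, (b1+h) mod int r) \<and>
      ((c2+h') div int e, (c2+h') mod int e, v2) = ((b2+h) div int r, int i2, (b2+h) mod int r)"
        have q: "pt2 k1 c1 = pt1 i1 b1" "pt2 k1 (c1+h') = pt1 i2 b2" "pt2 k2 c2 = pt1 i1 (b1+h)" "pt2 k2 (c2+h') = pt1 i2 (b2+h)"
          apply (simp only: P1 G1 A[THEN conjunct1])
          apply (simp only: P1 G1 A[THEN conjunct2, THEN conjunct1])
          apply (simp only: P1 G1 A[THEN conjunct2, THEN conjunct2, THEN conjunct1])
          by (simp only: P1 G1 A[THEN conjunct2, THEN conjunct2, THEN conjunct2])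
        show ?thesis
          apply (rule exI[of _ c1], rule exI[of _ c2], rule exI[of _ h'])
          unfolding q GG using mem cc h' by (intro conjI; blast)
      next
        assume A: "(c1 div int e, c1 mod int e, v1) = ((b2+h) div int r, int i2, (b2+h) mod int r) \<and>
      ((c1+h') div int e, (c1+h') mod int e, v1) = ((b1+h) div int r, int i1, (b1+h) mod int r) \<and>
      (c2 div int e, c2 mod int e, v2) = (b2 div int r, int i2, b2 mod int r) \<and>
      ((c2+h') div int e, (c2+h') mod int e, v2) = (b1 div int r, int i1, b1 mod int r)"
        have q: "pt2 k1 c1 = pt1 i2 (b2+h)" "pt2 k1 (c1+h') = pt1 i1 (b1+h)" "pt2 k2 c2 = pt1 i2 b2" "pt2 k2 (c2+h') = pt1 i1 b1"
          apply (simp only: P1 G1 A[THEN conjunct1])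
          apply (simp only: P1 G1 A[THEN conjunct2, THEN conjunct1])
          apply (simp only: P1 G1 A[THEN conjunct2, THEN conjunct2, THEN conjunct1])
          by (simp only: P1 G1 A[THEN conjunct2, THEN conjunct2, THEN conjunct2])
        show ?thesis
          apply (rule exI[of _ c1], rule exI[of _ c2], rule exI[of _ h'])
          unfolding q GG using mem cc h' by (intro conjI; blast)
      qed
    qed
  next
    assume "move2 e (Phi e r lam s) (Phi e r mu s)"
    then obtain k1 k2 b1 b2 h where k1: "k1 < r" and k2: "k2 < r" and c: "b1 mod int e = b2 mod int e" "h > 0"
      and mem: "pt2 k1 b1 \<in> Bl" "pt2 k1 (b1+h) \<notin> Bl" "pt2 k2 b2 \<notin> Bl" "pt2 k2 (b2+h) \<in> Bl"
      and GG: "Bm = (Bl - {pt2 k1 b1, pt2 k2 (b2+h)}) \<union> {pt2 k1 (b1+h), pt2 k2 b2}" using R by blast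
    define u1 where "u1 = int r - 1 - int k1"
    define u2 where "u2 = int r - 1 - int k2"
    have u: "0 \<le> u1" "u1 < int r" "0 \<le> u2" "u2 < int r" using k1 k2 u1_def u2_def by auto
    have nd: "(u1, b1) \<noteq> (u2, b2)"
    proof
      assume "(u1, b1) = (u2, b2)"
      then have "k1 = k2" "b1 = b2" using u1_def u2_def by simp_all
      then show False using mem(1,3) by simp
    qed
    have pq: "int r > 0" "int e > 0" using e r by auto
    obtain v1 v2 c1 c2 h' where v: "0 \<le> v1" "v1 < int e" "0 \<le> v2" "v2 < int e" and cc: "c1 mod int r = c2 mod int r"
      and h': "h' > 0" and opt:
      "((c1 div int r, c1 mod int r, v1) = (b1 div int e, u1, b1 mod int e) \<and>
      ((c1+h') div int r, (c1+h') mod int r, v1) = (b2 div int e, u2, b2 mod int e) \<and>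
      (c2 div int r, c2 mod int r, v2) = ((b1+h) div int e, u1, (b1+h) mod int e) \<and>
      ((c2+h') div int r, (c2+h') mod int r, v2) = ((b2+h) div int e, u2, (b2+h) mod int e)) \<or>
     ((c1 div int r, c1 mod int r, v1) = ((b2+h) div int e, u2, (b2+h) mod int e) \<and>
      ((c1+h') div int r, (c1+h') mod int r, v1) = ((b1+h) div int e, u1, (b1+h) mod int e) \<and>
      (c2 div int r, c2 mod int r, v2) = (b2 div int e, u2, b2 mod int e) \<and>
      ((c2+h') div int r, (c2+h') mod int r, v2) = (b1 div int e, u1, b1 mod int e))"
      using swap_move[OF pq u c nd] by blast
    define i1 where "i1 = nat v1"
    define i2 where "i2 = nat v2"
    have i: "i1 < e" "i2 < e" "int i1 = v1" "int i2 = v2" using v i1_def i2_def by auto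
    have P1: "pt1 i1 c = H (c div int r, c mod int r, v1)" "pt1 i2 c = H (c div int r, c mod int r, v2)" for c
      using H1 i by auto
    have Q1: "pt2 k1 c = H (c div int e, u1, c mod int e)" "pt2 k2 c = H (c div int e, u2, c mod int e)" for c
      using H2 u1_def u2_def by auto
    show "move2 r (eta e lam s) (eta e mu s)"
      unfolding L
    proof (rule exI[of _ i1], intro conjI impI, fact, rule exI[of _ i2], intro conjI impI, fact)
      from opt show "\<exists>b1 b2 h. b1 mod int r = b2 mod int r \<and> h > 0 \<and>
      pt1 i1 b1 \<in> Bl \<and> pt1 i1 (b1+h) \<notin> Bl \<and> pt1 i2 b2 \<notin> Bl \<and> pt1 i2 (b2+h) \<in> Bl \<and>
      Bm = (Bl - {pt1 i1 b1, pt1 i2 (b2+h)}) \<union> {pt1 i1 (b1+h), pt1 i2 b2}"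
      proof
        assume A: "(c1 div int r, c1 mod int r, v1) = (b1 div int e, u1, b1 mod int e) \<and>
      ((c1+h') div int r, (c1+h') mod int r, v1) = (b2 div int e, u2, b2 mod int e) \<and>
      (c2 div int r, c2 mod int r, v2) = ((b1+h) div int e, u1, (b1+h) mod int e) \<and>
      ((c2+h') div int r, (c2+h') mod int r, v2) = ((b2+h) div int e, u2, (b2+h) mod int e)"
        have q: "pt1 i1 c1 = pt2 k1 b1" "pt1 i1 (c1+h') = pt2 k2 b2" "pt1 i2 c2 = pt2 k1 (b1+h)" "pt1 i2 (c2+h') = pt2 k2 (b2+h)"
          apply (simp only: P1 Q1 A[THEN conjunct1])
          apply (simp only: P1 Q1 A[THEN conjunct2, THEN conjunct1])
          apply (simp only: P1 Q1 A[THEN conjunct2, THEN conjunct2, THEN conjunct1])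
          by (simp only: P1 Q1 A[THEN conjunct2, THEN conjunct2, THEN conjunct2])
        show ?thesis
          apply (rule exI[of _ c1], rule exI[of _ c2], rule exI[of _ h'])
          unfolding q GG using mem cc h' by (intro conjI; blast)
      next
        assume A: "(c1 div int r, c1 mod int r, v1) = ((b2+h) div int e, u2, (b2+h) mod int e) \<and>
      ((c1+h') div int r, (c1+h') mod int r, v1) = ((b1+h) div int e, u1, (b1+h) mod int e) \<and>
      (c2 div int r, c2 mod int r, v2) = (b2 div int e, u2, b2 mod int e) \<and>
      ((c2+h') div int r, (c2+h') mod int r, v2) = (b1 div int e, u1, b1 mod int e)"
        have q: "pt1 i1 c1 = pt2 k2 (b2+h)" "pt1 i1 (c1+h') = pt2 k1 (b1+h)" "pt1 i2 c2 = pt2 k2 b2" "pt1 i2 (c2+h') = pt2 k1 b1"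
          apply (simp only: P1 Q1 A[THEN conjunct1])
          apply (simp only: P1 Q1 A[THEN conjunct2, THEN conjunct1])
          apply (simp only: P1 Q1 A[THEN conjunct2, THEN conjunct2, THEN conjunct1])
          by (simp only: P1 Q1 A[THEN conjunct2, THEN conjunct2, THEN conjunct2])
        show ?thesis
          apply (rule exI[of _ c1], rule exI[of _ c2], rule exI[of _ h'])
          unfolding q GG using mem cc h' by (intro conjI; blast)
      qed
    qed
  qed
qed


end
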